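(* Let $g$ be an invertible measure preserving transformation of a probability space $(X,\nu)$ with no periodic points. Let $B\subset X$ be measurable with $\nu(B)=\nu_0>0$, and let $N:B\to\{1,2,3,\dots\}$ be a measurable function such that $\tilde g(x):=g^{N(x)}(x)\in B$ for almost every $x\in B$. Assume $$\int_B N(x)\,d\nu<\infty.$$ Then there is a measurable subset $B'\subset B$ such that: (1) $\nu(B')>0$, $\tilde g(B')=B'$, and $g_*=\tilde g|_{B'}$ is invertible and $\nu$-preserving; (2) $$\int_{B'}N(x)\,d\nu\ge \nu\Big(\bigcup_{j=-\infty}^{\infty}g^j(B)\Big).$$
   Context: Such a set $B'$ is called a kernel of $\tilde g$. *)

theory Defs
  imports "HOL-Probability.Probability"
begin

definition measure_preserving :: "'a measure \<Rightarrow> 'b measure \<Rightarrow> ('a \<Rightarrow> 'b) set" where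
  "measure_preserving M M' = {f. f \<in> measurable M M' \<and>
     (\<forall>A\<in>sets M'. emeasure M (f -` A \<inter> space M) = emeasure M' A)}"

definition ipow :: "'a set \<Rightarrow> ('a \<Rightarrow> 'a) \<Rightarrow> int \<Rightarrow> 'a \<Rightarrow> 'a" where
  "ipow S g j = (if 0 \<le> j then g ^^ nat j else the_inv_into S g ^^ nat (- j))"

end

theory Submission imports Defs begin

locale kset =
  fixes M :: "'a measure" and g :: "'a \<Rightarrow> 'a" and B :: "'a set" and N :: "'a \<Rightarrow> nat"
  assumes prob: "prob_space M"
    and g_mp: "g \<in> measure_preserving M M"
    and g_bij: "bij_betw g (space M) (space M)"
    and g_inv_meas: "the_inv_into (space M) g \<in> measurable M M"
    and B_meas: "B \<in> sets M"
    and N_meas: "N \<in> measurable (restrict_space M B) (count_space UNIV)"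
    and N_pos: "\<forall>x\<in>B. N x \<ge> 1"
    and return: "AE x in M. x \<in> B \<longrightarrow> (g ^^ N x) x \<in> B"
    and N_int: "(\<integral>\<^sup>+x\<in>B. of_nat (N x) \<partial>M) < \<infinity>"
begin

definition "h = the_inv_into (space M) g"
definition "T = (\<lambda>x. (g ^^ N x) x)"

lemma g_in: "x \<in> space M \<Longrightarrow> g x \<in> space M"
  by (rule bij_betw_apply[OF g_bij])
lemma g_inj: "inj_on g (space M)" using g_bij by (simp add: bij_betw_def)
lemma g_img: "g ` space M = space M" using g_bij by (simp add: bij_betw_def)
lemma h_in: "x \<in> space M \<Longrightarrow> h x \<in> space M"
  unfolding h_def by (rule the_inv_into_into[OF g_inj]) (simp_all add: g_img)
lemma gh: "x \<in> space M \<Longrightarrow> g (h x) = x"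
  unfolding h_def by (rule f_the_inv_into_f[OF g_inj]) (simp add: g_img)
lemma hg: "x \<in> space M \<Longrightarrow> h (g x) = x"
  unfolding h_def by (rule the_inv_into_f_f[OF g_inj])

lemma gn_in: "x \<in> space M \<Longrightarrow> (g ^^ n) x \<in> space M"
  by (induction n) (auto simp: g_in)
lemma hn_in: "x \<in> space M \<Longrightarrow> (h ^^ n) x \<in> space M"
  by (induction n) (auto simp: h_in)
lemma gn_hn: "x \<in> space M \<Longrightarrow> (g ^^ n) ((h ^^ n) x) = x"
proof (induction n)
  case (Suc n)
  have "(g ^^ Suc n) ((h ^^ Suc n) x) = (g ^^ n) (g (h ((h ^^ n) x)))"
    by (simp only: funpow_Suc_right[of _ g] funpow.simps(2)[where f=h] o_apply)
  also have "\<dots> = x" using Suc hn_in gh by simp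
  finally show ?case .
qed simp
lemma hn_gn: "x \<in> space M \<Longrightarrow> (h ^^ n) ((g ^^ n) x) = x"
proof (induction n)
  case (Suc n)
  have "(h ^^ Suc n) ((g ^^ Suc n) x) = (h ^^ n) (h (g ((g ^^ n) x)))"
    by (simp only: funpow_Suc_right[of _ h] funpow.simps(2)[where f=g] o_apply)
  also have "\<dots> = x" using Suc gn_in hg by simp
  finally show ?case .
qed simp

lemma gh_shift: "y \<in> space M \<Longrightarrow> i \<le> n \<Longrightarrow> (g ^^ i) ((h ^^ n) y) = (h ^^ (n - i)) y"
proof -
  assume y: "y \<in> space M" and "i \<le> n"
  then have "(h ^^ n) y = (h ^^ i) ((h ^^ (n - i)) y)"
    by (metis comp_apply funpow_add le_add_diff_inverse)
  then show ?thesis using gn_hn hn_in y by simp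
qed
lemma hg_shift: "y \<in> space M \<Longrightarrow> i \<le> n \<Longrightarrow> (h ^^ i) ((g ^^ n) y) = (g ^^ (n - i)) y"
proof -
  assume y: "y \<in> space M" and "i \<le> n"
  then have "(g ^^ n) y = (g ^^ i) ((g ^^ (n - i)) y)"
    by (metis comp_apply funpow_add le_add_diff_inverse)
  then show ?thesis using hn_gn gn_in y by simp
qed
lemma gh_shift2: "y \<in> space M \<Longrightarrow> n \<le> i \<Longrightarrow> (g ^^ i) ((h ^^ n) y) = (g ^^ (i - n)) y"
proof -
  assume y: "y \<in> space M" and "n \<le> i"
  then have "(g ^^ i) = (g ^^ (i - n)) \<circ> (g ^^ n)"
    by (metis funpow_add le_add_diff_inverse2)
  then show ?thesis using gn_hn y by simp
qed
lemma hg_shift2: "y \<in> space M \<Longrightarrow> n \<le> i \<Longrightarrow> (h ^^ i) ((g ^^ n) y) = (h ^^ (i - n)) y"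
proof -
  assume y: "y \<in> space M" and "n \<le> i"
  then have "(h ^^ i) = (h ^^ (i - n)) \<circ> (h ^^ n)"
    by (metis funpow_add le_add_diff_inverse2)
  then show ?thesis using hn_gn y by simp
qed

lemma gimg_eq: "E \<subseteq> space M \<Longrightarrow> (g ^^ n) ` E = (h ^^ n) -` E \<inter> space M"
  using gn_in hn_gn gn_hn hn_in by (auto, metis image_eqI)
lemma himg_eq: "E \<subseteq> space M \<Longrightarrow> (h ^^ n) ` E = (g ^^ n) -` E \<inter> space M"
  using gn_in hn_gn gn_hn hn_in by (auto, metis image_eqI)

lemma g_meas: "g \<in> M \<rightarrow>\<^sub>M M" using g_mp unfolding measure_preserving_def by auto
lemma h_meas: "h \<in> M \<rightarrow>\<^sub>M M" using g_inv_meas unfolding h_def .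
lemma gn_meas: "(g ^^ n) \<in> M \<rightarrow>\<^sub>M M"
proof (induction n)
  case (Suc n) then show ?case using measurable_compose[OF Suc g_meas] by simp
qed (simp add: measurable_ident[unfolded id_def])
lemma hn_meas: "(h ^^ n) \<in> M \<rightarrow>\<^sub>M M"
proof (induction n)
  case (Suc n) then show ?case using measurable_compose[OF Suc h_meas] by simp
qed (simp add: measurable_ident[unfolded id_def])

lemma gn_pre: "A \<in> sets M \<Longrightarrow> emeasure M ((g ^^ n) -` A \<inter> space M) = emeasure M A"
proof (induction n)
  case (Suc n)
  have e: "(g ^^ Suc n) -` A \<inter> space M = g -` ((g ^^ n) -` A \<inter> space M) \<inter> space M"
    unfolding funpow_Suc_right using g_in by auto
  have m: "(g ^^ n) -` A \<inter> space M \<in> sets M"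
    using gn_meas Suc.prems measurable_sets by blast
  have "emeasure M (g -` ((g ^^ n) -` A \<inter> space M) \<inter> space M) = emeasure M ((g ^^ n) -` A \<inter> space M)"
    using g_mp m unfolding measure_preserving_def by auto
  then show ?case using e Suc.IH[OF Suc.prems] by (simp only:)
qed simp

lemma gimg: "E \<in> sets M \<Longrightarrow> (g ^^ n) ` E \<in> sets M \<and> emeasure M ((g ^^ n) ` E) = emeasure M E"
proof -
  assume E: "E \<in> sets M"
  then have Es: "E \<subseteq> space M" using sets.sets_into_space by blast
  have m: "(g ^^ n) ` E \<in> sets M" using gimg_eq[OF Es] hn_meas E measurable_sets by metis
  have "(g ^^ n) -` ((g ^^ n) ` E) \<inter> space M = E"
    using Es hn_gn gn_in by (auto, metis subsetD)
  then show ?thesis using gn_pre[OF m, of n] m by simp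
qed

lemma himg: "E \<in> sets M \<Longrightarrow> (h ^^ n) ` E \<in> sets M \<and> emeasure M ((h ^^ n) ` E) = emeasure M E"
proof -
  assume E: "E \<in> sets M"
  then have Es: "E \<subseteq> space M" using sets.sets_into_space by blast
  show ?thesis using himg_eq[OF Es] gn_meas E measurable_sets gn_pre by metis
qed

lemma hn_pre: "A \<in> sets M \<Longrightarrow> emeasure M ((h ^^ n) -` A \<inter> space M) = emeasure M A"
  using gimg gimg_eq sets.sets_into_space by metis


lemma B_sub: "B \<subseteq> space M" using B_meas sets.sets_into_space by blast

lemma N_sets: "{x\<in>B. P (N x)} \<in> sets M"
proof -
  have "N -` {n. P n} \<inter> space (restrict_space M B) \<in> sets (restrict_space M B)"
    using N_meas measurable_sets by fastforce
  moreover have "N -` {n. P n} \<inter> space (restrict_space M B) = {x\<in>B. P (N x)}"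
    using B_sub by (auto simp: space_restrict_space)
  ultimately show ?thesis using B_meas
    by (metis (no_types, lifting) sets.Int_space_eq2 sets_restrict_space_iff)
qed

lemma N_sets2: "A \<in> sets M \<Longrightarrow> A \<subseteq> B \<Longrightarrow> {x\<in>A. P (N x)} \<in> sets M"
proof -
  assume "A \<in> sets M" "A \<subseteq> B"
  then have "{x\<in>A. P (N x)} = A \<inter> {x\<in>B. P (N x)}" by auto
  then show ?thesis using N_sets[of P] \<open>A \<in> sets M\<close> by (simp add: sets.Int)
qed

lemma N_eq2: "A \<in> sets M \<Longrightarrow> A \<subseteq> B \<Longrightarrow> {x\<in>A. N x = n} \<in> sets M"
  using N_sets2[of A "\<lambda>k. k = n"] by simp
lemma N_gt2: "A \<in> sets M \<Longrightarrow> A \<subseteq> B \<Longrightarrow> {x\<in>A. i < N x} \<in> sets M"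
  using N_sets2[of A "\<lambda>k. i < k"] by simp
lemma N_eqB: "{x\<in>B. N x = n} \<in> sets M" using N_sets[of "\<lambda>k. k = n"] by simp
lemma N_gtB: "{x\<in>B. i < N x} \<in> sets M" using N_sets[of "\<lambda>k. i < k"] by simp

lemma T_in: "x \<in> space M \<Longrightarrow> T x \<in> space M" unfolding T_def by (rule gn_in)

lemma T_img_eq: "T ` A = (\<Union>n. (g ^^ n) ` {x\<in>A. N x = n})"
proof (intro equalityI subsetI)
  fix y assume "y \<in> T ` A"
  then obtain x where x: "x \<in> A" "y = T x" by blast
  then have "y \<in> (g ^^ N x) ` {x'\<in>A. N x' = N x}" unfolding T_def by blast
  then show "y \<in> (\<Union>n. (g ^^ n) ` {x\<in>A. N x = n})" by blast
next
  fix y assume "y \<in> (\<Union>n. (g ^^ n) ` {x\<in>A. N x = n})"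
  then obtain n x where "x \<in> A" "N x = n" "y = (g ^^ n) x" by blast
  then show "y \<in> T ` A" unfolding T_def by blast
qed

lemma T_img: "A \<in> sets M \<Longrightarrow> A \<subseteq> B \<Longrightarrow> T ` A \<in> sets M"
proof -
  assume A: "A \<in> sets M" "A \<subseteq> B"
  have "(g ^^ n) ` {x\<in>A. N x = n} \<in> sets M" for n using gimg N_eq2[OF A] by blast
  then show ?thesis unfolding T_img_eq by (intro sets.countable_UN) auto
qed

definition "invs Z = {y\<in>space M. \<forall>j. (h ^^ j) y \<notin> Z \<and> (g ^^ j) y \<notin> Z}"

lemma invs_g: "y \<in> invs Z \<Longrightarrow> (g ^^ n) y \<in> invs Z"
proof -
  assume y: "y \<in> invs Z"
  then have ys: "y \<in> space M" unfolding invs_def by auto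
  { fix j
    have "(h ^^ j) ((g ^^ n) y) \<notin> Z"
    proof (cases "j \<le> n")
      case True then show ?thesis using hg_shift[OF ys True] y unfolding invs_def by auto
    next
      case False then show ?thesis using hg_shift2[OF ys, of n j] y unfolding invs_def by auto
    qed
    moreover have "(g ^^ j) ((g ^^ n) y) = (g ^^ (j + n)) y" by (simp add: funpow_add)
    ultimately have "(h ^^ j) ((g ^^ n) y) \<notin> Z \<and> (g ^^ j) ((g ^^ n) y) \<notin> Z"
      using y unfolding invs_def by auto }
  then show ?thesis using gn_in ys unfolding invs_def by auto
qed

lemma invs_h: "y \<in> invs Z \<Longrightarrow> (h ^^ n) y \<in> invs Z"
proof -
  assume y: "y \<in> invs Z"
  then have ys: "y \<in> space M" unfolding invs_def by auto
  { fix j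
    have "(g ^^ j) ((h ^^ n) y) \<notin> Z"
    proof (cases "j \<le> n")
      case True then show ?thesis using gh_shift[OF ys True] y unfolding invs_def by auto
    next
      case False then show ?thesis using gh_shift2[OF ys, of n j] y unfolding invs_def by auto
    qed
    moreover have "(h ^^ j) ((h ^^ n) y) = (h ^^ (j + n)) y" by (simp add: funpow_add)
    ultimately have "(h ^^ j) ((h ^^ n) y) \<notin> Z \<and> (g ^^ j) ((h ^^ n) y) \<notin> Z"
      using y unfolding invs_def by auto }
  then show ?thesis using hn_in ys unfolding invs_def by auto
qed

lemma invs_notin: "y \<in> invs Z \<Longrightarrow> y \<notin> Z"
  unfolding invs_def by (metis (mono_tags, lifting) mem_Collect_eq funpow_0)

lemma invs_space: "invs Z \<subseteq> space M" unfolding invs_def by auto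

lemma invs_null: "Z \<in> null_sets M \<Longrightarrow> invs Z \<in> sets M \<and> space M - invs Z \<in> null_sets M"
proof -
  assume Z: "Z \<in> null_sets M"
  then have Zs: "Z \<in> sets M" by auto
  have eq: "space M - invs Z = (\<Union>j. (h ^^ j) -` Z \<inter> space M) \<union> (\<Union>j. (g ^^ j) -` Z \<inter> space M)"
    unfolding invs_def by auto
  have "\<And>j. (h ^^ j) -` Z \<inter> space M \<in> null_sets M"
    using hn_pre[OF Zs] hn_meas measurable_sets Zs Z by (metis null_setsD1 null_setsI)
  moreover have "\<And>j. (g ^^ j) -` Z \<inter> space M \<in> null_sets M"
    using gn_pre[OF Zs] gn_meas measurable_sets Zs Z by (metis null_setsD1 null_setsI)
  ultimately have n: "space M - invs Z \<in> null_sets M" unfolding eq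
    by (intro null_sets.Un null_sets_UN) auto
  then have "space M - (space M - invs Z) \<in> sets M" by auto
  moreover have "space M - (space M - invs Z) = invs Z" using invs_space by auto
  ultimately show ?thesis using n by auto
qed

definition "Cset y = {i. (h ^^ i) y \<in> B \<and> i < N ((h ^^ i) y)}"

lemma sum_lt: "(\<Sum>i. if i < n then (1::ennreal) else 0) = of_nat n"
proof -
  have "(\<Sum>i. if i < n then (1::ennreal) else 0) = (\<Sum>i\<in>{..<n}. if i < n then (1::ennreal) else 0)"
    by (rule suminf_finite) auto
  also have "\<dots> = of_nat n" by simp
  finally show ?thesis .
qed

lemma Lcount:
  assumes A: "A \<in> sets M" "A \<subseteq> B"
  shows "(\<integral>\<^sup>+y. (\<Sum>i. indicator ((h ^^ i) -` {x\<in>A. i < N x} \<inter> space M) y) \<partial>M)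
       = (\<integral>\<^sup>+x\<in>A. of_nat (N x) \<partial>M)"
proof -
  have Ai: "\<And>i. {x\<in>A. i < N x} \<in> sets M" using N_gt2[OF A] by blast
  then have Pi: "\<And>i. (h ^^ i) -` {x\<in>A. i < N x} \<inter> space M \<in> sets M"
    using hn_meas measurable_sets by blast
  have "(\<integral>\<^sup>+y. (\<Sum>i. indicator ((h ^^ i) -` {x\<in>A. i < N x} \<inter> space M) y) \<partial>M)
     = (\<Sum>i. emeasure M ((h ^^ i) -` {x\<in>A. i < N x} \<inter> space M))"
    using Pi by (simp add: nn_integral_suminf)
  also have "\<dots> = (\<Sum>i. emeasure M {x\<in>A. i < N x})"
    using hn_pre[OF Ai] by simp
  also have "\<dots> = (\<integral>\<^sup>+x. (\<Sum>i. indicator {x\<in>A. i < N x} x) \<partial>M)"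
    using Ai by (simp add: nn_integral_suminf)
  also have "\<dots> = (\<integral>\<^sup>+x\<in>A. of_nat (N x) \<partial>M)"
  proof (rule nn_integral_cong)
    fix x
    show "(\<Sum>i. indicator {x\<in>A. i < N x} x) = (of_nat (N x) * indicator A x :: ennreal)"
    proof (cases "x \<in> A")
      case True
      then have "(\<lambda>i. indicator {x\<in>A. i < N x} x :: ennreal) = (\<lambda>i. if i < N x then 1 else 0)"
        by (auto simp: indicator_def)
      then show ?thesis using True sum_lt by simp
    next
      case False then show ?thesis by (simp add: indicator_def)
    qed
  qed
  finally show ?thesis .
qed

lemma inf_sum:
  assumes "infinite C"
  shows "(\<Sum>i. if i \<in> C then 1 else 0 :: ennreal) = \<infinity>"
proof (rule ccontr)
  assume "(\<Sum>i. if i \<in> C then 1 else 0 :: ennreal) \<noteq> \<infinity>"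
  then have "(\<Sum>i. if i \<in> C then 1 else 0 :: ennreal) < top" by (simp add: top.not_eq_extremum)
  then obtain n where n: "(\<Sum>i. if i \<in> C then 1 else 0 :: ennreal) < of_nat n"
    using ennreal_Ex_less_of_nat by blast
  obtain F where F: "finite F" "card F = n" "F \<subseteq> C"
    using infinite_arbitrarily_large[OF assms] by blast
  have "(\<Sum>i\<in>F. if i \<in> C then 1 else 0 :: ennreal) \<le> (\<Sum>i. if i \<in> C then 1 else 0 :: ennreal)"
    by (rule sum_le_suminf) (auto simp: F)
  moreover have "(\<Sum>i\<in>F. if i \<in> C then 1 else 0 :: ennreal) = (\<Sum>i\<in>F. 1)"
    using F(3) by (intro sum.cong) auto
  moreover have "(\<Sum>i\<in>F. 1 :: ennreal) = of_nat n" using F by simp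
  ultimately show False using n by simp
qed

definition "fB y = (\<Sum>i. indicator ((h ^^ i) -` {x\<in>B. i < N x} \<inter> space M) y :: ennreal)"

lemma fB_meas: "fB \<in> borel_measurable M"
proof -
  have Pi: "\<And>i. (h ^^ i) -` {x\<in>B. i < N x} \<inter> space M \<in> sets M"
    using measurable_sets[OF hn_meas N_gtB] by blast
  show ?thesis unfolding fB_def
    by (rule borel_measurable_suminf_order, rule borel_measurable_indicator, rule Pi)
qed

lemma fB_AE: "AE y in M. fB y \<noteq> \<infinity>"
proof -
  have "integral\<^sup>N M fB \<noteq> \<infinity>"
    using Lcount[OF B_meas order_refl] N_int unfolding fB_def by simp
  then show ?thesis using fB_meas nn_integral_PInf_AE by blast
qed

lemma Cset_fin: "y \<in> space M \<Longrightarrow> fB y \<noteq> \<infinity> \<Longrightarrow> finite (Cset y)"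
proof -
  assume y: "y \<in> space M" and f: "fB y \<noteq> \<infinity>"
  have "(\<lambda>i. indicator ((h ^^ i) -` {x\<in>B. i < N x} \<inter> space M) y :: ennreal)
          = (\<lambda>i. if i \<in> Cset y then 1 else 0)"
    using y by (auto simp: indicator_def Cset_def)
  then show "finite (Cset y)" using f inf_sum unfolding fB_def by fastforce
qed

definition "Z1 = {x\<in>B. T x \<notin> B}"
definition "Z2 = {y\<in>space M. fB y = \<infinity>}"
definition "E0 = {x\<in>B. \<forall>i. (h ^^ Suc i) x \<notin> B}"
definition "Z3 = (\<Union>n. (h ^^ n) -` E0 \<inter> space M)"

lemma Z1_null: "Z1 \<in> null_sets M"
proof -
  have eq: "Z1 = (\<Union>n. {x\<in>B. N x = n} \<inter> ((g ^^ n) -` (space M - B) \<inter> space M))"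
    unfolding Z1_def T_def using B_sub gn_in by auto
  have m: "Z1 \<in> sets M" unfolding eq using N_eqB gn_meas measurable_sets B_meas
    by (intro sets.countable_UN) auto
  have e: "{x\<in>space M. \<not> (x \<in> B \<longrightarrow> (g ^^ N x) x \<in> B)} = Z1"
    unfolding Z1_def T_def using B_sub by auto
  show ?thesis using AE_iff_measurable[OF m e] return m by auto
qed

lemma Z2_null: "Z2 \<in> null_sets M"
proof -
  have m: "Z2 \<in> sets M"
  proof -
    have "fB -` {\<infinity>} \<inter> space M \<in> sets M" using fB_meas measurable_sets by fastforce
    moreover have "fB -` {\<infinity>} \<inter> space M = Z2" unfolding Z2_def by auto
    ultimately show ?thesis by simp
  qed
  have e: "Z2 = {x\<in>space M. \<not> fB x \<noteq> \<infinity>}" unfolding Z2_def by auto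
  show ?thesis using AE_iff_measurable[OF m e[symmetric]] fB_AE m by auto
qed

lemma E0_sets: "E0 \<in> sets M"
proof -
  have "E0 = B \<inter> (\<Inter>i. (h ^^ Suc i) -` (space M - B) \<inter> space M)"
    unfolding E0_def using B_sub hn_in by blast
  moreover have "(\<Inter>i. (h ^^ Suc i) -` (space M - B) \<inter> space M) \<in> sets M"
    using B_meas by (intro sets.countable_INT') (auto intro!: measurable_sets[OF hn_meas] simp del: funpow.simps)
  ultimately show ?thesis using B_meas by auto
qed

lemma E0_null: "E0 \<in> null_sets M"
proof -
  interpret P: prob_space M by (rule prob)
  define P where "P j = (h ^^ j) -` E0 \<inter> space M" for j
  have Ps: "\<And>j. P j \<in> sets M" unfolding P_def using hn_meas measurable_sets E0_sets by blast
  have Pm: "\<And>j. measure M (P j) = measure M E0"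
    unfolding P_def measure_def using hn_pre[OF E0_sets] by simp
  have disj: "disjoint_family_on P S" for S
  proof -
    { fix a b x assume ab: "a < b" and xa: "x \<in> P a" and xb: "x \<in> P b"
      then have xs: "x \<in> space M" unfolding P_def by auto
      have "(h ^^ b) x = (h ^^ Suc (b - a - 1)) ((h ^^ a) x)"
        using ab by (metis Suc_diff_Suc comp_apply diff_Suc_1 funpow_add le_add_diff_inverse2 less_imp_le_nat)
      moreover have "(h ^^ a) x \<in> E0" "(h ^^ b) x \<in> E0" using xa xb unfolding P_def by auto
      ultimately have False unfolding E0_def by auto }
    then show ?thesis unfolding disjoint_family_on_def
      by (metis disjoint_iff_not_equal linorder_neqE_nat)
  qed
  have "real n * measure M E0 \<le> 1" for n
  proof -
    have "measure M (\<Union> (P ` {..<n})) = (\<Sum>j\<in>{..<n}. measure M (P j))"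
      using Ps disj by (intro P.finite_measure_finite_Union) auto
    also have "\<dots> = real n * measure M E0" using Pm by simp
    finally show ?thesis using P.prob_le_1 by metis
  qed
  then have "measure M E0 = 0"
  proof -
    assume H: "\<And>n. real n * measure M E0 \<le> 1"
    show ?thesis
    proof (rule ccontr)
      assume "measure M E0 \<noteq> 0"
      then have pos: "measure M E0 > 0" using measure_nonneg by (metis order_le_less)
      obtain n where "1 / measure M E0 < real n" using reals_Archimedean2 by blast
      then have "1 < real n * measure M E0" using pos by (simp add: field_simps)
      then show False using H[of n] by simp
    qed
  qed
  then show ?thesis using E0_sets P.emeasure_eq_measure by (simp add: null_setsI)
qed

lemma Z3_null: "Z3 \<in> null_sets M"
proof -
  have "\<And>n. (h ^^ n) -` E0 \<inter> space M \<in> null_sets M"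
    using hn_pre[OF E0_sets] E0_null hn_meas measurable_sets E0_sets
    by (metis null_setsD1 null_setsI)
  then show ?thesis unfolding Z3_def by (intro null_sets_UN) auto
qed

lemma recur: "x \<in> B \<Longrightarrow> x \<notin> Z3 \<Longrightarrow> infinite {i. (h ^^ i) x \<in> B}"
proof
  assume x: "x \<in> B" "x \<notin> Z3" and fin: "finite {i. (h ^^ i) x \<in> B}"
  define n where "n = Max {i. (h ^^ i) x \<in> B}"
  have "0 \<in> {i. (h ^^ i) x \<in> B}" using x by simp
  then have nB: "(h ^^ n) x \<in> B" unfolding n_def using fin Max_in by blast
  have "(h ^^ Suc i) ((h ^^ n) x) \<notin> B" for i
  proof
    assume "(h ^^ Suc i) ((h ^^ n) x) \<in> B"
    then have "(h ^^ (Suc i + n)) x \<in> B" by (simp add: funpow_add)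
    then have "Suc i + n \<le> n" unfolding n_def using fin Max_ge by blast
    then show False by simp
  qed
  then have "(h ^^ n) x \<in> E0" using nB unfolding E0_def by auto
  then show False using x B_sub unfolding Z3_def by auto
qed

definition "W1 = invs (Z1 \<union> Z2 \<union> Z3)"
definition "B1 = B \<inter> W1"

lemma Z0_null: "Z1 \<union> Z2 \<union> Z3 \<in> null_sets M" using Z1_null Z2_null Z3_null by auto

lemma W1_props: "W1 \<in> sets M" "space M - W1 \<in> null_sets M"
  using invs_null[OF Z0_null] unfolding W1_def by auto

lemma B1_sets: "B1 \<in> sets M" unfolding B1_def using W1_props B_meas by auto

lemma W1_fin: "y \<in> W1 \<Longrightarrow> finite (Cset y)"
  using invs_notin invs_space Cset_fin unfolding W1_def Z2_def by blast

lemma T_B1: "x \<in> B1 \<Longrightarrow> T x \<in> B1"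
  unfolding B1_def W1_def using invs_notin[of x] invs_g[of x _ "N x"] unfolding Z1_def T_def by auto

lemma Tk_sub: "(T ^^ k) ` B1 \<subseteq> B1"
proof (induction k)
  case (Suc k)
  then show ?case using T_B1 by (auto simp: image_comp[symmetric])
qed simp

lemma Tk_sets: "(T ^^ k) ` B1 \<in> sets M"
proof (induction k)
  case 0 then show ?case using B1_sets by simp
next
  case (Suc k)
  have "(T ^^ Suc k) ` B1 = T ` ((T ^^ k) ` B1)" by (simp add: image_comp)
  then show ?case using T_img[OF Suc] Tk_sub B1_def by auto
qed

lemma Tk_mono: "k \<le> k' \<Longrightarrow> (T ^^ k') ` B1 \<subseteq> (T ^^ k) ` B1"
proof -
  assume "k \<le> k'"
  then obtain d where d: "k' = k + d" by (metis le_add_diff_inverse)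
  have "(T ^^ k') ` B1 = (T ^^ k) ` ((T ^^ d) ` B1)" unfolding d funpow_add by (simp add: image_comp)
  then show ?thesis using image_mono[OF Tk_sub[of d], of "T ^^ k"] by simp
qed

definition "K1 = (\<Inter>k. (T ^^ k) ` B1)"

lemma K1_sets: "K1 \<in> sets M" unfolding K1_def using Tk_sets by (intro sets.countable_INT') auto
lemma K1_sub: "K1 \<subseteq> B1"
proof
  fix x assume "x \<in> K1" then have "x \<in> (T ^^ 0) ` B1" unfolding K1_def by blast
  then show "x \<in> B1" by simp
qed

lemma pigeon:
  fixes P :: "'b \<Rightarrow> nat \<Rightarrow> bool"
  assumes "finite F" "\<And>k. \<exists>j\<in>F. P j k" "\<And>j k k'. k \<le> k' \<Longrightarrow> P j k' \<Longrightarrow> P j k"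
  shows "\<exists>j\<in>F. \<forall>k. P j k"
proof (rule ccontr)
  assume "\<not> ?thesis"
  then have "\<forall>j\<in>F. \<exists>k. \<not> P j k" by auto
  then obtain kf where kf: "\<And>j. j \<in> F \<Longrightarrow> \<not> P j (kf j)" by metis
  obtain j where j: "j \<in> F" "P j (Max (kf ` F))" using assms(2) by blast
  have "kf j \<le> Max (kf ` F)" using j assms(1) by simp
  then show False using assms(3) j kf by blast
qed

lemma TK_sub: "T ` K1 \<subseteq> K1"
proof
  fix c assume "c \<in> T ` K1"
  then obtain x where x: "x \<in> K1" "c = T x" by auto
  { fix k
    have "x \<in> (T ^^ k) ` B1" using x unfolding K1_def by auto
    then have "c \<in> (T ^^ Suc k) ` B1" using x by (auto simp: image_comp[symmetric])
    then have "c \<in> (T ^^ k) ` B1" using Tk_mono[of k "Suc k"] by auto }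
  then show "c \<in> K1" unfolding K1_def by auto
qed

lemma T_inv_pt: "d \<in> space M \<Longrightarrow> T d = c \<Longrightarrow> d = (h ^^ N d) c"
  unfolding T_def using hn_gn by auto

lemma K_sub_TK: "K1 \<subseteq> T ` K1"
proof
  fix c assume c: "c \<in> K1"
  then have cB1: "c \<in> B1" using K1_sub by auto
  then have cs: "c \<in> space M" using B1_def B_sub by auto
  have hcW: "h c \<in> W1" using cB1 invs_h[of c _ 1] unfolding B1_def W1_def by auto
  let ?P = "\<lambda>j k. (h ^^ Suc j) c \<in> (T ^^ k) ` B1 \<and> Suc j = N ((h ^^ Suc j) c)"
  have "\<exists>j\<in>Cset (h c). \<forall>k. ?P j k"
  proof (rule pigeon)
    show "finite (Cset (h c))" using W1_fin hcW by blast
  next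
    fix k
    have "c \<in> (T ^^ Suc k) ` B1" using c unfolding K1_def by blast
    then obtain d where d: "d \<in> (T ^^ k) ` B1" "T d = c" by (auto simp: image_comp[symmetric])
    then have dB: "d \<in> B" using Tk_sub B1_def by auto
    then have ds: "d \<in> space M" using B_sub by auto
    have N1: "N d \<ge> 1" using N_pos dB by auto
    define j where "j = N d - 1"
    have Nj: "N d = Suc j" using N1 unfolding j_def by simp
    have dj: "(h ^^ Suc j) c = d" using T_inv_pt[OF ds d(2)] Nj by simp
    have "(h ^^ j) (h c) = (h ^^ Suc j) c" by (simp add: funpow_Suc_right del: funpow.simps)
    then have "j \<in> Cset (h c)" unfolding Cset_def using dj dB Nj by simp
    moreover have "?P j k" using dj d Nj by simp
    ultimately show "\<exists>j\<in>Cset (h c). ?P j k" by blast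
  next
    fix j k k' assume "k \<le> k'" "?P j k'"
    then show "?P j k" using Tk_mono by blast
  qed
  then obtain j where j: "\<forall>k. ?P j k" by blast
  then have "(h ^^ Suc j) c \<in> K1" unfolding K1_def by blast
  moreover have "T ((h ^^ Suc j) c) = c" using j unfolding T_def
    by (metis cs gn_hn)
  ultimately show "c \<in> T ` K1" by (metis image_eqI)
qed

lemma TK_eq: "T ` K1 = K1" using TK_sub K_sub_TK by auto

lemma chain:
  assumes y: "y \<in> space M"
  shows "(h ^^ i) y \<in> B1 \<Longrightarrow> \<exists>m i'. (T ^^ m) ((h ^^ i) y) = (h ^^ i') y \<and> i' < N ((h ^^ i') y)"
proof (induction i rule: less_induct)
  case (less i)
  show ?case
  proof (cases "i < N ((h ^^ i) y)")
    case True
    then show ?thesis by (metis funpow_0)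
  next
    case False
    have Tb: "T ((h ^^ i) y) = (h ^^ (i - N ((h ^^ i) y))) y"
      unfolding T_def using gh_shift[OF y] False by simp
    have "N ((h ^^ i) y) \<ge> 1" using N_pos less.prems B1_def by auto
    then have lt: "i - N ((h ^^ i) y) < i" using False by simp
    have "(h ^^ (i - N ((h ^^ i) y))) y \<in> B1" using T_B1[OF less.prems] Tb by simp
    then obtain m i' where mi: "(T ^^ m) ((h ^^ (i - N ((h ^^ i) y))) y) = (h ^^ i') y"
      "i' < N ((h ^^ i') y)" using less.IH[OF lt] by blast
    have "(T ^^ Suc m) ((h ^^ i) y) = (h ^^ i') y"
      using mi Tb by (simp add: funpow_Suc_right del: funpow.simps)
    then show ?thesis using mi by blast
  qed
qed

lemma depth:
  assumes y: "y \<in> W1"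
  shows "\<exists>D. \<forall>i\<ge>D. (h ^^ i) y \<in> B1 \<longrightarrow>
           (\<exists>m\<ge>k. \<exists>i'. (T ^^ m) ((h ^^ i) y) = (h ^^ i') y \<and> i' < N ((h ^^ i') y))"
proof (induction k)
  case 0
  have "y \<in> space M" using y invs_space W1_def by auto
  then show ?case using chain by blast
next
  case (Suc k)
  have ys: "y \<in> space M" using y invs_space W1_def by auto
  obtain D where D: "\<forall>i\<ge>D. (h ^^ i) y \<in> B1 \<longrightarrow>
           (\<exists>m\<ge>k. \<exists>i'. (T ^^ m) ((h ^^ i) y) = (h ^^ i') y \<and> i' < N ((h ^^ i') y))"
    using Suc by blast
  define z where "z = (h ^^ D) y"
  have zW: "z \<in> W1" using invs_h y unfolding z_def W1_def by auto
  then have fin: "finite (Cset z)" using W1_fin by blast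
  define L where "L = Max (insert 0 (Cset z))"
  have L: "\<And>j. j \<in> Cset z \<Longrightarrow> j \<le> L" unfolding L_def using fin by simp
  show ?case
  proof (rule exI[of _ "D + L + 1"], intro allI impI)
    fix i assume i: "D + L + 1 \<le> i" and b: "(h ^^ i) y \<in> B1"
    have ii: "i = (i - D) + D" using i by simp
    have hz: "(h ^^ (i - D)) z = (h ^^ i) y"
      unfolding z_def by (subst (2) ii, subst funpow_add) simp
    have NB: "N ((h ^^ i) y) \<le> i - D"
    proof (rule ccontr)
      assume "\<not> ?thesis"
      then have "i - D \<in> Cset z" unfolding Cset_def using hz b B1_def by auto
      then show False using L i by fastforce
    qed
    have Tb: "T ((h ^^ i) y) = (h ^^ (i - N ((h ^^ i) y))) y"
      unfolding T_def using gh_shift[OF ys] NB by simp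
    have "(h ^^ (i - N ((h ^^ i) y))) y \<in> B1" using T_B1[OF b] Tb by simp
    moreover have "i - N ((h ^^ i) y) \<ge> D" using NB i by simp
    ultimately obtain m i' where mi: "m \<ge> k" "(T ^^ m) ((h ^^ (i - N ((h ^^ i) y))) y) = (h ^^ i') y"
      "i' < N ((h ^^ i') y)" using D by blast
    have "(T ^^ Suc m) ((h ^^ i) y) = (h ^^ i') y"
      using mi Tb by (simp add: funpow_Suc_right del: funpow.simps)
    then show "\<exists>m\<ge>Suc k. \<exists>i'. (T ^^ m) ((h ^^ i) y) = (h ^^ i') y \<and> i' < N ((h ^^ i') y)"
      using mi by (intro exI[of _ "Suc m"]) auto
  qed
qed

lemma cover:
  assumes y: "y \<in> W1" and inf: "infinite {i. (h ^^ i) y \<in> B}"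
  shows "\<exists>i. (h ^^ i) y \<in> K1 \<and> i < N ((h ^^ i) y)"
proof -
  let ?Q = "\<lambda>i k. (h ^^ i) y \<in> (T ^^ k) ` B1 \<and> i < N ((h ^^ i) y)"
  have "\<exists>i\<in>Cset y. \<forall>k. ?Q i k"
  proof (rule pigeon[where F="Cset y" and P="?Q"])
    show "finite (Cset y)" using W1_fin y by blast
  next
    fix k
    obtain D where D: "\<forall>i\<ge>D. (h ^^ i) y \<in> B1 \<longrightarrow>
           (\<exists>m\<ge>k. \<exists>i'. (T ^^ m) ((h ^^ i) y) = (h ^^ i') y \<and> i' < N ((h ^^ i') y))"
      using depth[OF y] by blast
    have "\<exists>i\<ge>D. i \<in> {i. (h ^^ i) y \<in> B}" using inf unfolding infinite_nat_iff_unbounded_le by blast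
    then obtain i where i: "i \<ge> D" "(h ^^ i) y \<in> B" by blast
    have "(h ^^ i) y \<in> W1" using invs_h y unfolding W1_def by auto
    then have b: "(h ^^ i) y \<in> B1" using i B1_def by auto
    then obtain m i' where mi: "m \<ge> k" "(T ^^ m) ((h ^^ i) y) = (h ^^ i') y" "i' < N ((h ^^ i') y)"
      using D i by blast
    have "(h ^^ i') y \<in> (T ^^ m) ` B1" using mi b by (metis image_eqI)
    then have "(h ^^ i') y \<in> (T ^^ k) ` B1" using Tk_mono mi by blast
    moreover then have "i' \<in> Cset y" using mi Tk_sub B1_def unfolding Cset_def by auto
    ultimately show "\<exists>i\<in>Cset y. ?Q i k" using mi by blast
  next
    fix j k k' assume "k \<le> k'" "?Q j k'"
    then show "?Q j k" using Tk_mono by blast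
  qed
  then show ?thesis unfolding K1_def by blast
qed

definition "Kn n = {x\<in>K1. N x = n}"
definition "II n m = T ` Kn n \<inter> T ` Kn m"

lemma Kn_sets: "Kn n \<in> sets M"
  unfolding Kn_def using N_eq2[OF K1_sets] K1_sub B1_def by auto

lemma TKn: "T ` Kn n = (g ^^ n) ` Kn n" unfolding Kn_def T_def by force

lemma TKn_sets: "T ` Kn n \<in> sets M \<and> emeasure M (T ` Kn n) = emeasure M (Kn n)"
  unfolding TKn using gimg Kn_sets by blast

lemma II_null: "n \<noteq> m \<Longrightarrow> II n m \<in> null_sets M"
proof -
  assume nm: "n \<noteq> m"
  interpret P: prob_space M by (rule prob)
  have IIs: "II n m \<in> sets M" unfolding II_def using TKn_sets by auto
  have "(\<Sum>l. emeasure M (Kn l)) = emeasure M (\<Union>l. Kn l)"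
    using Kn_sets by (intro suminf_emeasure) (auto simp: disjoint_family_on_def Kn_def)
  moreover have "(\<Union>l. Kn l) = K1" unfolding Kn_def by auto
  ultimately have sumK: "(\<Sum>l. emeasure M (T ` Kn l)) = emeasure M K1" using TKn_sets by simp
  have ms: "\<And>l. T ` Kn l \<in> sets M" using TKn_sets by blast
  have "(\<integral>\<^sup>+x. (\<Sum>l. indicator (T ` Kn l) x) \<partial>M) = (\<Sum>l. integral\<^sup>N M (indicator (T ` Kn l)))"
    by (rule nn_integral_suminf) (use ms in auto)
  also have "\<dots> = (\<Sum>l. emeasure M (T ` Kn l))" using ms by simp
  also have "\<dots> = emeasure M K1" by (rule sumK)
  finally have int1: "(\<integral>\<^sup>+x. (\<Sum>l. indicator (T ` Kn l) x) \<partial>M) = emeasure M K1" .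
  have pw: "indicator K1 x + indicator (II n m) x \<le> (\<Sum>l. indicator (T ` Kn l) x :: ennreal)" for x
  proof (cases "x \<in> II n m")
    case True
    then have xK: "x \<in> K1" unfolding II_def using TK_sub Kn_def by auto
    have "(\<Sum>l\<in>{n,m}. indicator (T ` Kn l) x :: ennreal) \<le> (\<Sum>l. indicator (T ` Kn l) x)"
      by (rule sum_le_suminf) auto
    moreover have "(\<Sum>l\<in>{n,m}. indicator (T ` Kn l) x :: ennreal) = 2"
      using True nm unfolding II_def by simp
    ultimately show ?thesis using True xK by simp
  next
    case False
    show ?thesis
    proof (cases "x \<in> K1")
      case True
      then obtain d where d: "d \<in> K1" "x = T d" using K_sub_TK by auto
      then have "x \<in> T ` Kn (N d)" unfolding Kn_def by auto
      then have "(\<Sum>l\<in>{N d}. indicator (T ` Kn l) x :: ennreal) = 1" by simp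
      moreover have "(\<Sum>l\<in>{N d}. indicator (T ` Kn l) x :: ennreal) \<le> (\<Sum>l. indicator (T ` Kn l) x)"
        by (rule sum_le_suminf) auto
      ultimately show ?thesis using True False by simp
    qed (use False in simp)
  qed
  have "(\<integral>\<^sup>+x. indicator K1 x + indicator (II n m) x \<partial>M) \<le> emeasure M K1"
    unfolding int1[symmetric] by (intro nn_integral_mono pw)
  moreover have "(\<integral>\<^sup>+x. indicator K1 x + indicator (II n m) x \<partial>M) = emeasure M K1 + emeasure M (II n m)"
    using K1_sets IIs by (simp add: nn_integral_add)
  ultimately have "emeasure M K1 + emeasure M (II n m) \<le> emeasure M K1" by simp
  moreover have "emeasure M K1 \<noteq> \<infinity>" using P.emeasure_finite by simp
  ultimately have "emeasure M (II n m) = 0" by simp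
  then show ?thesis using IIs by auto
qed

definition "Z4 = (\<Union>n. \<Union>m. if n = m then {} else II n m)"

lemma Z4_null: "Z4 \<in> null_sets M"
  unfolding Z4_def using II_null by (intro null_sets_UN) auto

definition "Bp = K1 \<inter> invs Z4"

lemma Bp_sets: "Bp \<in> sets M" unfolding Bp_def using K1_sets invs_null[OF Z4_null] by auto
lemma Bp_sub: "Bp \<subseteq> B" unfolding Bp_def using K1_sub B1_def by auto
lemma Bp_space: "Bp \<subseteq> space M" using Bp_sub B_sub by auto

lemma TBp: "T ` Bp = Bp"
proof
  show "T ` Bp \<subseteq> Bp"
    using TK_sub invs_g unfolding Bp_def T_def by fastforce
next
  show "Bp \<subseteq> T ` Bp"
  proof
    fix c assume c: "c \<in> Bp"
    then obtain d where d: "d \<in> K1" "T d = c" using K_sub_TK Bp_def by auto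
    have "d \<in> space M" using d K1_sub B1_def B_sub by auto
    then have "d = (h ^^ N d) c" using T_inv_pt d by blast
    have "c \<in> invs Z4" using c Bp_def by auto
    then have "(h ^^ N d) c \<in> invs Z4" by (rule invs_h)
    then have "d \<in> invs Z4" using \<open>d = (h ^^ N d) c\<close> by simp
    then show "c \<in> T ` Bp" using d Bp_def by auto
  qed
qed

lemma inj_T: "inj_on T Bp"
proof
  fix x1 x2 assume x: "x1 \<in> Bp" "x2 \<in> Bp" "T x1 = T x2"
  have "T x1 \<in> Bp" using x TBp by auto
  then have nz: "T x1 \<notin> Z4" using invs_notin Bp_def by auto
  have NN: "N x1 = N x2"
  proof (rule ccontr)
    assume ne: "N x1 \<noteq> N x2"
    have k1: "x1 \<in> Kn (N x1)" "x2 \<in> Kn (N x2)" using x Bp_def Kn_def by auto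
    have "T x1 \<in> T ` Kn (N x1)" using k1 by blast
    moreover have "T x1 \<in> T ` Kn (N x2)" using k1 x(3) by (metis image_eqI)
    ultimately have "T x1 \<in> II (N x1) (N x2)" unfolding II_def by blast
    then show False using nz ne unfolding Z4_def by auto
  qed
  have "x1 = (h ^^ N x1) (T x1)" "x2 = (h ^^ N x2) (T x2)"
    using T_inv_pt x Bp_space by auto
  then show "x1 = x2" using NN x by simp
qed

lemma disj_T: "A \<subseteq> Bp \<Longrightarrow> disjoint_family (\<lambda>n. (g ^^ n) ` {x\<in>A. N x = n})"
proof -
  assume A: "A \<subseteq> Bp"
  { fix n m y assume nm: "n \<noteq> m" and y1: "y \<in> (g ^^ n) ` {x\<in>A. N x = n}" and y2: "y \<in> (g ^^ m) ` {x\<in>A. N x = m}"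
    then obtain a b where ab: "a \<in> A" "N a = n" "y = (g ^^ n) a" "b \<in> A" "N b = m" "y = (g ^^ m) b" by blast
    then have "T a = T b" unfolding T_def by simp
    then have "a = b" using inj_T A ab unfolding inj_on_def by blast
    then have False using ab nm by simp }
  then show ?thesis unfolding disjoint_family_on_def by blast
qed

lemma emeasure_TA: "A \<in> sets M \<Longrightarrow> A \<subseteq> Bp \<Longrightarrow> T ` A \<in> sets M \<and> emeasure M (T ` A) = emeasure M A"
proof -
  assume A: "A \<in> sets M" "A \<subseteq> Bp"
  have An: "\<And>n. {x\<in>A. N x = n} \<in> sets M" using N_eq2[OF A(1)] A(2) Bp_sub by blast
  have gAn: "\<And>n. (g ^^ n) ` {x\<in>A. N x = n} \<in> sets M" using gimg An by blast
  have "emeasure M (T ` A) = emeasure M (\<Union>n. (g ^^ n) ` {x\<in>A. N x = n})" using T_img_eq by simp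
  also have "\<dots> = (\<Sum>n. emeasure M ((g ^^ n) ` {x\<in>A. N x = n}))"
    by (rule suminf_emeasure[symmetric]) (use gAn disj_T[OF A(2)] in auto)
  also have "\<dots> = (\<Sum>n. emeasure M {x\<in>A. N x = n})" using gimg An by simp
  also have "\<dots> = emeasure M (\<Union>n. {x\<in>A. N x = n})"
    using An by (intro suminf_emeasure) (auto simp: disjoint_family_on_def)
  also have "(\<Union>n. {x\<in>A. N x = n}) = A" by auto
  finally show ?thesis using T_img A Bp_sub by auto
qed

lemma emeasure_Tpre: "A \<in> sets M \<Longrightarrow> A \<subseteq> Bp \<Longrightarrow> T -` A \<inter> Bp \<in> sets M \<and> emeasure M (T -` A \<inter> Bp) = emeasure M A"
proof -
  assume A: "A \<in> sets M" "A \<subseteq> Bp"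
  have eq: "T -` A \<inter> Bp = (\<Union>n. {x\<in>Bp. N x = n} \<inter> ((g ^^ n) -` A \<inter> space M))"
    unfolding T_def using Bp_space by auto
  have m: "T -` A \<inter> Bp \<in> sets M" unfolding eq
    using N_eq2[OF Bp_sets Bp_sub] gn_meas measurable_sets A by (intro sets.countable_UN) auto
  have "A \<subseteq> T ` (T -` A \<inter> Bp)"
  proof
    fix x assume x: "x \<in> A"
    then have "x \<in> T ` Bp" using TBp A by auto
    then obtain d where "d \<in> Bp" "x = T d" by auto
    then show "x \<in> T ` (T -` A \<inter> Bp)" using x by auto
  qed
  then have "T ` (T -` A \<inter> Bp) = A" by auto
  then show ?thesis using emeasure_TA[OF m] m by auto
qed

lemma mp_restrict:
  assumes "\<And>x. x \<in> Bp \<Longrightarrow> f x \<in> Bp"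
    and "\<And>A. A \<in> sets M \<Longrightarrow> A \<subseteq> Bp \<Longrightarrow> f -` A \<inter> Bp \<in> sets M \<and> emeasure M (f -` A \<inter> Bp) = emeasure M A"
  shows "f \<in> measure_preserving (restrict_space M Bp) (restrict_space M Bp)"
proof -
  have sp: "space (restrict_space M Bp) = Bp" using Bp_space by (auto simp: space_restrict_space)
  have bs: "Bp \<inter> space M \<in> sets M" using Bp_sets by auto
  have ss: "\<And>A. A \<in> sets (restrict_space M Bp) \<longleftrightarrow> A \<subseteq> Bp \<and> A \<in> sets M"
    using sets_restrict_space_iff[OF bs] by simp
  have meas: "f \<in> restrict_space M Bp \<rightarrow>\<^sub>M restrict_space M Bp"
    by (rule measurableI) (use assms sp ss in auto)
  show ?thesis unfolding measure_preserving_def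
    using meas assms(2) ss sp emeasure_restrict_space[OF bs] by auto
qed

lemma T_mp: "T \<in> measure_preserving (restrict_space M Bp) (restrict_space M Bp)"
  using TBp emeasure_Tpre by (intro mp_restrict) auto

lemma bij_T: "bij_betw T Bp Bp" using inj_T TBp by (simp add: bij_betw_def)

lemma Tinv_mp: "the_inv_into Bp T \<in> measure_preserving (restrict_space M Bp) (restrict_space M Bp)"
proof (rule mp_restrict)
  fix x assume "x \<in> Bp" then show "the_inv_into Bp T x \<in> Bp"
    using bij_T by (metis bij_betw_def order_refl the_inv_into_into)
next
  fix A assume A: "A \<in> sets M" "A \<subseteq> Bp"
  have "the_inv_into Bp T -` A \<inter> Bp = T ` A"
  proof
    show "the_inv_into Bp T -` A \<inter> Bp \<subseteq> T ` A"
      using bij_T by (auto simp: bij_betw_def f_the_inv_into_f[symmetric] intro!: image_eqI)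
  next
    show "T ` A \<subseteq> the_inv_into Bp T -` A \<inter> Bp"
      using bij_T A by (auto simp: bij_betw_def the_inv_into_f_f)
  qed
  then show "the_inv_into Bp T -` A \<inter> Bp \<in> sets M \<and> emeasure M (the_inv_into Bp T -` A \<inter> Bp) = emeasure M A"
    using emeasure_TA A by simp
qed

definition "Sset = (\<Union>j::int. ipow (space M) g j ` B)"

lemma ipow_eq: "ipow (space M) g j = (if 0 \<le> j then g ^^ nat j else h ^^ nat (- j))"
  unfolding ipow_def h_def by simp

lemma S_inf:
  assumes y: "y \<in> W1" and yS: "y \<in> Sset"
  shows "infinite {i. (h ^^ i) y \<in> B}"
proof -
  obtain j b where b: "b \<in> B" "y = ipow (space M) g j b" using yS unfolding Sset_def by blast
  have bs: "b \<in> space M" using b B_sub by auto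
  show ?thesis
  proof (cases "0 \<le> j")
    case True
    define n where "n = nat j"
    have yb: "y = (g ^^ n) b" using b True ipow_eq n_def by simp
    then have bh: "b = (h ^^ n) y" using hn_gn bs by simp
    have "b \<in> W1" using invs_h y bh unfolding W1_def by auto
    then have "b \<notin> Z3" using invs_notin unfolding W1_def by blast
    then have inf: "infinite {i. (h ^^ i) b \<in> B}" using recur b by blast
    show ?thesis unfolding infinite_nat_iff_unbounded_le
    proof
      fix m
      obtain i where i: "i \<ge> m" "(h ^^ i) b \<in> B"
        using inf unfolding infinite_nat_iff_unbounded_le by blast
      have "(h ^^ i) b = (h ^^ (i + n)) y" using bh by (simp add: funpow_add)
      then show "\<exists>i'\<ge>m. i' \<in> {i. (h ^^ i) y \<in> B}" using i by (intro exI[of _ "i + n"]) auto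
    qed
  next
    case False
    define n where "n = nat (- j)"
    have yb: "y = (h ^^ n) b" using b False ipow_eq n_def by simp
    have ys: "y \<in> space M" using y invs_space W1_def by auto
    have bg: "b = (g ^^ n) y" using gn_hn bs yb by simp
    have "b \<in> W1" using invs_g y bg unfolding W1_def by auto
    then have "b \<notin> Z3" using invs_notin unfolding W1_def by blast
    then have inf: "infinite {i. (h ^^ i) b \<in> B}" using recur b by blast
    show ?thesis unfolding infinite_nat_iff_unbounded_le
    proof
      fix m
      obtain i where i: "i \<ge> m + n" "(h ^^ i) b \<in> B"
        using inf unfolding infinite_nat_iff_unbounded_le by blast
      have "(h ^^ i) b = (h ^^ (i - n)) y" using bg hg_shift2[OF ys, of n i] i by simp
      then show "\<exists>i'\<ge>m. i' \<in> {i. (h ^^ i) y \<in> B}" using i by (intro exI[of _ "i - n"]) auto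
    qed
  qed
qed

definition "Cov = (\<Union>i. (h ^^ i) -` {x\<in>Bp. i < N x} \<inter> space M)"

lemma Cov_sets: "Cov \<in> sets M"
proof -
  have "(h ^^ i) -` {x\<in>Bp. i < N x} \<inter> space M \<in> sets M" for i
    using measurable_sets[OF hn_meas N_gt2[OF Bp_sets Bp_sub]] by blast
  then show ?thesis unfolding Cov_def by (intro sets.countable_UN) auto
qed

lemma Cov_le: "emeasure M Cov \<le> (\<integral>\<^sup>+x\<in>Bp. of_nat (N x) \<partial>M)"
proof -
  have "emeasure M Cov = (\<integral>\<^sup>+y. indicator Cov y \<partial>M)" using Cov_sets by simp
  also have "\<dots> \<le> (\<integral>\<^sup>+y. (\<Sum>i. indicator ((h ^^ i) -` {x\<in>Bp. i < N x} \<inter> space M) y) \<partial>M)"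
  proof (rule nn_integral_mono)
    fix y
    show "indicator Cov y \<le> (\<Sum>i. indicator ((h ^^ i) -` {x\<in>Bp. i < N x} \<inter> space M) y :: ennreal)"
    proof (cases "y \<in> Cov")
      case True
      then obtain i where i: "y \<in> (h ^^ i) -` {x\<in>Bp. i < N x} \<inter> space M" unfolding Cov_def by blast
      have "(\<Sum>l\<in>{i}. indicator ((h ^^ l) -` {x\<in>Bp. l < N x} \<inter> space M) y :: ennreal)
          \<le> (\<Sum>l. indicator ((h ^^ l) -` {x\<in>Bp. l < N x} \<inter> space M) y)"
        by (rule sum_le_suminf) auto
      then show ?thesis using i True by simp
    qed simp
  qed
  also have "\<dots> = (\<integral>\<^sup>+x\<in>Bp. of_nat (N x) \<partial>M)" by (rule Lcount[OF Bp_sets Bp_sub])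
  finally show ?thesis .
qed

definition "Nul = (space M - W1) \<union> (space M - invs Z4)"

lemma Nul_null: "Nul \<in> null_sets M"
  unfolding Nul_def using W1_props invs_null[OF Z4_null] by auto

lemma S_sub: "Sset \<subseteq> Cov \<union> Nul"
proof
  fix y assume yS: "y \<in> Sset"
  then obtain j b where b: "b \<in> B" "y = ipow (space M) g j b" unfolding Sset_def by blast
  have ys: "y \<in> space M" using b B_sub gn_in hn_in unfolding ipow_eq by (auto split: if_splits)
  show "y \<in> Cov \<union> Nul"
  proof (cases "y \<in> W1 \<and> y \<in> invs Z4")
    case True
    then obtain i where i: "(h ^^ i) y \<in> K1" "i < N ((h ^^ i) y)" using cover S_inf yS by blast
    have "(h ^^ i) y \<in> invs Z4" using True invs_h by blast
    then have "(h ^^ i) y \<in> Bp" using i Bp_def by auto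
    then have "y \<in> Cov" unfolding Cov_def using i ys by blast
    then show ?thesis by blast
  next
    case False then show ?thesis unfolding Nul_def using ys by blast
  qed
qed

lemma S_le: "emeasure M Sset \<le> (\<integral>\<^sup>+x\<in>Bp. of_nat (N x) \<partial>M)"
proof -
  have "emeasure M Sset \<le> emeasure M (Cov \<union> Nul)"
    using S_sub Cov_sets Nul_null by (intro emeasure_mono) auto
  also have "\<dots> \<le> emeasure M Cov + emeasure M Nul"
    using Cov_sets Nul_null by (intro emeasure_subadditive) auto
  also have "\<dots> = emeasure M Cov" using Nul_null by auto
  finally show ?thesis using Cov_le by simp
qed

lemma B_le: "emeasure M B \<le> (\<integral>\<^sup>+x\<in>Bp. of_nat (N x) \<partial>M)"
proof -
  have "B \<subseteq> Sset" unfolding Sset_def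
  proof
    fix x assume "x \<in> B"
    then have "x \<in> ipow (space M) g 0 ` B" unfolding ipow_eq by simp
    then show "x \<in> (\<Union>j::int. ipow (space M) g j ` B)" by blast
  qed
  then have "emeasure M B \<le> emeasure M (Cov \<union> Nul)"
    using S_sub Cov_sets Nul_null by (intro emeasure_mono) auto
  also have "\<dots> \<le> emeasure M Cov + emeasure M Nul"
    using Cov_sets Nul_null by (intro emeasure_subadditive) auto
  also have "\<dots> = emeasure M Cov" using Nul_null by auto
  finally show ?thesis using Cov_le by simp
qed

lemma main:
  assumes Bpos: "measure M B > 0"
  shows "\<exists>B'. B' \<in> sets M \<and> B' \<subseteq> B \<and> measure M B' > 0
      \<and> (\<lambda>x. (g ^^ N x) x) ` B' = B'
      \<and> bij_betw (\<lambda>x. (g ^^ N x) x) B' B'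
      \<and> (\<lambda>x. (g ^^ N x) x) \<in> measure_preserving (restrict_space M B') (restrict_space M B')
      \<and> the_inv_into B' (\<lambda>x. (g ^^ N x) x) \<in> measure_preserving (restrict_space M B') (restrict_space M B')
      \<and> (\<integral>\<^sup>+x\<in>B'. of_nat (N x) \<partial>M) \<ge> emeasure M (\<Union>j::int. ipow (space M) g j ` B)"
proof (rule exI[of _ Bp], intro conjI)
  interpret P: prob_space M by (rule prob)
  show "Bp \<in> sets M" by (rule Bp_sets)
  show "Bp \<subseteq> B" by (rule Bp_sub)
  show "(\<lambda>x. (g ^^ N x) x) ` Bp = Bp" using TBp unfolding T_def .
  show "bij_betw (\<lambda>x. (g ^^ N x) x) Bp Bp" using bij_T unfolding T_def .
  show "(\<lambda>x. (g ^^ N x) x) \<in> measure_preserving (restrict_space M Bp) (restrict_space M Bp)"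
    using T_mp unfolding T_def .
  show "the_inv_into Bp (\<lambda>x. (g ^^ N x) x) \<in> measure_preserving (restrict_space M Bp) (restrict_space M Bp)"
    using Tinv_mp unfolding T_def .
  show "(\<integral>\<^sup>+x\<in>Bp. of_nat (N x) \<partial>M) \<ge> emeasure M (\<Union>j::int. ipow (space M) g j ` B)"
    using S_le unfolding Sset_def .
  have "emeasure M B > 0" using Bpos P.emeasure_eq_measure by simp
  then have ipos: "(\<integral>\<^sup>+x\<in>Bp. of_nat (N x) \<partial>M) > 0" using B_le by (metis order_less_le_trans)
  have "emeasure M Bp \<noteq> 0"
  proof
    assume "emeasure M Bp = 0"
    then have "Bp \<in> null_sets M" using Bp_sets by auto
    then have "(\<integral>\<^sup>+x\<in>Bp. of_nat (N x) \<partial>M) = 0" by (rule nn_integral_null_set)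
    then show False using ipos by simp
  qed
  moreover have "emeasure M Bp = ennreal (measure M Bp)" by (rule P.emeasure_eq_measure)
  ultimately have "measure M Bp \<noteq> 0" by auto
  with measure_nonneg[of M Bp] show "measure M Bp > 0" by (simp add: order_less_le)
qed

end

theorem theorem3p2:
  fixes M :: "'a measure" and g :: "'a \<Rightarrow> 'a" and B :: "'a set" and N :: "'a \<Rightarrow> nat"
  assumes "prob_space M"
    and g_mp: "g \<in> measure_preserving M M"
    and g_bij: "bij_betw g (space M) (space M)"
    and g_inv_meas: "the_inv_into (space M) g \<in> measurable M M"
    and no_periodic: "\<forall>x\<in>space M. \<forall>n>0. (g ^^ n) x \<noteq> x"
    and B_meas: "B \<in> sets M" and B_pos: "measure M B > 0"
    and N_meas: "N \<in> measurable (restrict_space M B) (count_space UNIV)"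
    and N_pos: "\<forall>x\<in>B. N x \<ge> 1"
    and return: "AE x in M. x \<in> B \<longrightarrow> (g ^^ N x) x \<in> B"
    and N_int: "(\<integral>\<^sup>+x\<in>B. of_nat (N x) \<partial>M) < \<infinity>"
  shows "\<exists>B'. B' \<in> sets M \<and> B' \<subseteq> B \<and> measure M B' > 0
      \<and> (\<lambda>x. (g ^^ N x) x) ` B' = B'
      \<and> bij_betw (\<lambda>x. (g ^^ N x) x) B' B'
      \<and> (\<lambda>x. (g ^^ N x) x) \<in> measure_preserving (restrict_space M B') (restrict_space M B')
      \<and> the_inv_into B' (\<lambda>x. (g ^^ N x) x) \<in> measure_preserving (restrict_space M B') (restrict_space M B')
      \<and> (\<integral>\<^sup>+x\<in>B'. of_nat (N x) \<partial>M) \<ge> emeasure M (\<Union>j::int. ipow (space M) g j ` B)"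
proof -
  interpret K: kset M g B N
    by (rule kset.intro[OF assms(1) g_mp g_bij g_inv_meas B_meas N_meas N_pos return N_int])
  show ?thesis using K.main[OF B_pos] .
qed

end
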